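(* Let $n>2k\ge2$ be integers and let $J(n,k)$ be the Johnson graph with vertex set $V$ the $k$-subsets of $[n]=\{1,\dots,n\}$, two vertices adjacent iff their intersection has size $k-1$; let $A$ be its adjacency matrix. Let $w_1\neq w_2$ be two vertices, $\gamma>0$, and $H=-\gamma A-|w_1\rangle\langle w_1|-|w_2\rangle\langle w_2|$ on $\mathcal{H}=\mathbb{C}^V$. Let $\mathcal{H}_{\mathrm{inv}}$ be the subspace of vectors $f\in\mathcal{H}$ such that $f(v)=f(v')$ whenever $|v\cap w_1\cap w_2|=|v'\cap w_1\cap w_2|$ and the multisets $\{|v\cap w_1|,|v\cap w_2|\}$ and $\{|v'\cap w_1|,|v'\cap w_2|\}$ coincide. Let $|\lambda\rangle\in\mathcal{H}_{\mathrm{inv}}$ be a nonzero vector with $H|\lambda\rangle=\lambda|\lambda\rangle$, and let $\alpha=\langle w_1|\lambda\rangle$ (which equals $\langle w_2|\lambda\rangle$). Then the following are equivalent: (i) $\lambda\in\sigma(-\gamma A)$; (ii) $-\gamma A|\lambda\rangle=\lambda|\lambda\rangle$; (iii) $\alpha=0$.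
   Context: $\{|v\rangle : v\in V\}$ is the computational basis; $\sigma(U)$ denotes the spectrum of $U$. *)

theory Defs
  imports Complex_Main "HOL-Library.Multiset"
begin

definition johnson_V :: "nat \<Rightarrow> nat \<Rightarrow> nat set set" where
  "johnson_V n k = {S. S \<subseteq> {1..n} \<and> card S = k}"

definition johnson_adj :: "nat \<Rightarrow> nat set \<Rightarrow> nat set \<Rightarrow> bool" where
  "johnson_adj k u v \<longleftrightarrow> card (u \<inter> v) = k - 1"

text \<open>Vectors in C^V are functions nat set => complex vanishing outside V.\<close>
definition is_vec :: "nat \<Rightarrow> nat \<Rightarrow> (nat set \<Rightarrow> complex) \<Rightarrow> bool" where
  "is_vec n k f \<longleftrightarrow> (\<forall>v. v \<notin> johnson_V n k \<longrightarrow> f v = 0)"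

definition adjA :: "nat \<Rightarrow> nat \<Rightarrow> (nat set \<Rightarrow> complex) \<Rightarrow> nat set \<Rightarrow> complex" where
  "adjA n k f v = (if v \<in> johnson_V n k
     then (\<Sum>u\<in>johnson_V n k. if johnson_adj k v u then f u else 0) else 0)"

definition hamH :: "nat \<Rightarrow> nat \<Rightarrow> real \<Rightarrow> nat set \<Rightarrow> nat set \<Rightarrow> (nat set \<Rightarrow> complex) \<Rightarrow> nat set \<Rightarrow> complex" where
  "hamH n k \<gamma> w1 w2 f v =
     - complex_of_real \<gamma> * adjA n k f v
     - (if v = w1 then f w1 else 0) - (if v = w2 then f w2 else 0)"

definition spec_mgA :: "nat \<Rightarrow> nat \<Rightarrow> real \<Rightarrow> complex set" where
  "spec_mgA n k \<gamma> = {\<mu>. \<exists>g. is_vec n k g \<and> g \<noteq> (\<lambda>_. 0) \<and>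
       (\<forall>v. - complex_of_real \<gamma> * adjA n k g v = \<mu> * g v)}"

definition in_Hinv :: "nat \<Rightarrow> nat \<Rightarrow> nat set \<Rightarrow> nat set \<Rightarrow> (nat set \<Rightarrow> complex) \<Rightarrow> bool" where
  "in_Hinv n k w1 w2 f \<longleftrightarrow> is_vec n k f \<and>
     (\<forall>v\<in>johnson_V n k. \<forall>v'\<in>johnson_V n k.
        card (v \<inter> w1 \<inter> w2) = card (v' \<inter> w1 \<inter> w2) \<and>
        {# card (v \<inter> w1), card (v \<inter> w2) #} = {# card (v' \<inter> w1), card (v' \<inter> w2) #}
        \<longrightarrow> f v = f v')"

end

theory Submission
  imports Defs
begin

lemma finite_V: "finite (johnson_V n k)"
proof -
  have "johnson_V n k \<subseteq> Pow {1..n}" unfolding johnson_V_def by auto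
  then show ?thesis by (rule finite_subset) simp
qed

lemma pairing_sym:
  "(\<Sum>v\<in>johnson_V n k. h v * adjA n k f v) = (\<Sum>v\<in>johnson_V n k. adjA n k h v * f v)"
proof -
  let ?V = "johnson_V n k"
  have "(\<Sum>v\<in>?V. h v * adjA n k f v)
      = (\<Sum>v\<in>?V. \<Sum>u\<in>?V. if johnson_adj k v u then h v * f u else 0)"
    by (rule sum.cong) (auto simp: adjA_def sum_distrib_left intro!: sum.cong)
  also have "\<dots> = (\<Sum>u\<in>?V. \<Sum>v\<in>?V. if johnson_adj k v u then h v * f u else 0)"
    by (rule sum.swap)
  also have "\<dots> = (\<Sum>v\<in>?V. adjA n k h v * f v)"
    by (rule sum.cong) (auto simp: adjA_def sum_distrib_right johnson_adj_def Int_commute intro!: sum.cong)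
  finally show ?thesis .
qed

lemma pair_zero:
  assumes V: "w1 \<in> johnson_V n k" "w2 \<in> johnson_V n k" "w1 \<noteq> w2"
    and a: "\<alpha> \<noteq> 0"
    and Tf: "\<forall>v. - complex_of_real \<gamma> * adjA n k f v
              = lam * f v + (if v = w1 then \<alpha> else 0) + (if v = w2 then \<alpha> else 0)"
    and Th: "\<forall>v. - complex_of_real \<gamma> * adjA n k h v = lam * h v"
  shows "h w1 + h w2 = 0"
proof -
  let ?V = "johnson_V n k"
  have fin: "finite ?V" by (rule finite_V)
  have "(\<Sum>v\<in>?V. h v * (- complex_of_real \<gamma> * adjA n k f v))
      = (\<Sum>v\<in>?V. (- complex_of_real \<gamma> * adjA n k h v) * f v)"
  proof -
    have "(\<Sum>v\<in>?V. h v * (- complex_of_real \<gamma> * adjA n k f v))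
        = - complex_of_real \<gamma> * (\<Sum>v\<in>?V. h v * adjA n k f v)"
      by (simp add: sum_distrib_left algebra_simps)
    also have "\<dots> = - complex_of_real \<gamma> * (\<Sum>v\<in>?V. adjA n k h v * f v)"
      using pairing_sym[of h n k f] by simp
    also have "\<dots> = (\<Sum>v\<in>?V. (- complex_of_real \<gamma> * adjA n k h v) * f v)"
      by (simp add: sum_distrib_left algebra_simps)
    finally show ?thesis .
  qed
  also have "\<dots> = (\<Sum>v\<in>?V. lam * h v * f v)" using Th by simp
  finally have 1: "(\<Sum>v\<in>?V. h v * (- complex_of_real \<gamma> * adjA n k f v)) = (\<Sum>v\<in>?V. lam * h v * f v)" .
  have "(\<Sum>v\<in>?V. h v * (- complex_of_real \<gamma> * adjA n k f v))
     = (\<Sum>v\<in>?V. lam * h v * f v + (if v = w1 then h v * \<alpha> else 0) + (if v = w2 then h v * \<alpha> else 0))"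
    using Tf by (intro sum.cong) (auto simp: algebra_simps)
  also have "\<dots> = (\<Sum>v\<in>?V. lam * h v * f v) + h w1 * \<alpha> + h w2 * \<alpha>"
    using V fin by (simp add: sum.distrib)
  finally have "h w1 * \<alpha> + h w2 * \<alpha> = 0" using 1 by simp
  then have "(h w1 + h w2) * \<alpha> = 0" by (simp add: algebra_simps)
  then show ?thesis using a by simp
qed

lemma perm4:
  assumes b1: "bij_betw h1 A1 B1" and b2: "bij_betw h2 A2 B2" and b3: "bij_betw h3 A3 B3"
    and b4: "bij_betw h4 A4 B4"
    and dA: "A1 \<inter> A2 = {}" "A1 \<inter> A3 = {}" "A1 \<inter> A4 = {}" "A2 \<inter> A3 = {}" "A2 \<inter> A4 = {}" "A3 \<inter> A4 = {}"
    and dB: "B1 \<inter> B2 = {}" "B1 \<inter> B3 = {}" "B1 \<inter> B4 = {}" "B2 \<inter> B3 = {}" "B2 \<inter> B4 = {}" "B3 \<inter> B4 = {}"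
  shows "\<exists>\<sigma>. bij_betw \<sigma> (A1 \<union> A2 \<union> A3 \<union> A4) (B1 \<union> B2 \<union> B3 \<union> B4)
          \<and> \<sigma> ` A1 = B1 \<and> \<sigma> ` A2 = B2 \<and> \<sigma> ` A3 = B3"
proof -
  define \<sigma> where "\<sigma> x = (if x \<in> A1 then h1 x else if x \<in> A2 then h2 x else if x \<in> A3 then h3 x else h4 x)" for x
  have s1: "bij_betw \<sigma> A1 B1" using b1 by (rule bij_betw_cong[THEN iffD1, rotated]) (auto simp: \<sigma>_def)
  have s2: "bij_betw \<sigma> A2 B2" using b2 dA by (intro bij_betw_cong[THEN iffD1, rotated, OF b2]) (auto simp: \<sigma>_def)
  have s3: "bij_betw \<sigma> A3 B3" using b3 dA by (intro bij_betw_cong[THEN iffD1, rotated, OF b3]) (auto simp: \<sigma>_def)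
  have s4: "bij_betw \<sigma> A4 B4" using b4 dA by (intro bij_betw_cong[THEN iffD1, rotated, OF b4]) (auto simp: \<sigma>_def)
  have "bij_betw \<sigma> (A1 \<union> A2 \<union> A3 \<union> A4) (B1 \<union> B2 \<union> B3 \<union> B4)"
    by (intro bij_betw_combine s1 s2 s3 s4) (use dB in auto)
  moreover have "\<sigma> ` A1 = B1" "\<sigma> ` A2 = B2" "\<sigma> ` A3 = B3"
    using s1 s2 s3 by (auto simp: bij_betw_def)
  ultimately show ?thesis by blast
qed

lemma transport:
  assumes bij: "bij_betw \<sigma> {1..n} {1..n}"
    and Tg: "\<forall>v. - complex_of_real \<gamma> * adjA n k g v = lam * g v"
  defines "h \<equiv> (\<lambda>v. if v \<in> johnson_V n k then g (\<sigma> ` v) else 0)"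
  shows "\<forall>v. - complex_of_real \<gamma> * adjA n k h v = lam * h v"
proof
  fix v
  let ?V = "johnson_V n k"
  have inj: "inj_on \<sigma> {1..n}" and im: "\<sigma> ` {1..n} = {1..n}" using bij by (auto simp: bij_betw_def)
  have into: "\<sigma> ` u \<in> ?V" if "u \<in> ?V" for u
  proof -
    have "u \<subseteq> {1..n}" "card u = k" using that by (auto simp: johnson_V_def)
    moreover have "card (\<sigma> ` u) = card u" using inj \<open>u \<subseteq> {1..n}\<close> by (meson card_image inj_on_subset)
    ultimately show ?thesis using im by (auto simp: johnson_V_def)
  qed
  have injV: "inj_on (image \<sigma>) ?V"
    by (rule inj_onI) (use inj_on_image_eq_iff[OF inj] in \<open>auto simp: johnson_V_def\<close>)
  have bV: "bij_betw (image \<sigma>) ?V ?V"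
    unfolding bij_betw_def using endo_inj_surj[OF finite_V _ injV] into injV by blast
  have adj: "johnson_adj k (\<sigma> ` v') (\<sigma> ` u) = johnson_adj k v' u" if "v' \<in> ?V" "u \<in> ?V" for v' u
  proof -
    have sub: "v' \<subseteq> {1..n}" "u \<subseteq> {1..n}" using that by (auto simp: johnson_V_def)
    have "\<sigma> ` v' \<inter> \<sigma> ` u = \<sigma> ` (v' \<inter> u)" using inj_on_image_Int[OF inj sub] by simp
    moreover have "card (\<sigma> ` (v' \<inter> u)) = card (v' \<inter> u)"
      using inj sub by (meson card_image inj_on_subset le_infI1)
    ultimately show ?thesis by (simp add: johnson_adj_def)
  qed
  show "- complex_of_real \<gamma> * adjA n k h v = lam * h v"
  proof (cases "v \<in> ?V")
    case False then show ?thesis by (simp add: adjA_def h_def)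
  next
    case True
    have "adjA n k h v = (\<Sum>u\<in>?V. if johnson_adj k (\<sigma> ` v) (\<sigma> ` u) then g (\<sigma> ` u) else 0)"
      using True adj by (auto simp: adjA_def h_def intro!: sum.cong)
    also have "\<dots> = (\<Sum>u\<in>?V. if johnson_adj k (\<sigma> ` v) u then g u else 0)"
      by (rule sum.reindex_bij_betw[OF bV, where g = "\<lambda>u. if johnson_adj k (\<sigma> ` v) u then g u else 0"])
    also have "\<dots> = adjA n k g (\<sigma> ` v)" using into[OF True] by (simp add: adjA_def)
    finally show ?thesis using Tg True by (simp add: h_def)
  qed
qed

lemma pairmap:
  assumes "w1 \<in> johnson_V n k" "w2 \<in> johnson_V n k" "u \<in> johnson_V n k" "u' \<in> johnson_V n k"
    and c: "card (u \<inter> u') = card (w1 \<inter> w2)"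
  shows "\<exists>\<sigma>. bij_betw \<sigma> {1..n} {1..n} \<and> \<sigma> ` w1 = u \<and> \<sigma> ` w2 = u'"
proof -
  have W: "w1 \<subseteq> {1..n}" "w2 \<subseteq> {1..n}" "card w1 = k" "card w2 = k"
    and U: "u \<subseteq> {1..n}" "u' \<subseteq> {1..n}" "card u = k" "card u' = k"
    using assms by (auto simp: johnson_V_def)
  have fin: "finite w1" "finite w2" "finite u" "finite u'" using W U finite_subset by blast+
  have cards: "card (A - B) = card A - card (A \<inter> B)"
      "card ({1..n} - (A \<union> B)) = n - (card A + card B - card (A \<inter> B))"
    if "A \<subseteq> {1..n}" "B \<subseteq> {1..n}" for A B :: "nat set"
  proof -
    have fA: "finite A" "finite B" using that finite_subset by blast+
    show "card (A - B) = card A - card (A \<inter> B)" using fA by (simp add: card_Diff_subset_Int)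
    have "card (A \<union> B) = card A + card B - card (A \<inter> B)"
      using card_Un_Int[OF fA] by simp
    moreover have "card ({1..n} - (A \<union> B)) = n - card (A \<union> B)"
      using that fA by (simp add: card_Diff_subset)
    ultimately show "card ({1..n} - (A \<union> B)) = n - (card A + card B - card (A \<inter> B))" by simp
  qed
  have "\<exists>h. bij_betw h (w1 \<inter> w2) (u \<inter> u')"
    using fin c by (intro finite_same_card_bij) auto
  then obtain h1 where h1: "bij_betw h1 (w1 \<inter> w2) (u \<inter> u')" by blast
  have "\<exists>h. bij_betw h (w1 - w2) (u - u')"
    using fin c W U by (intro finite_same_card_bij) (auto simp: cards)
  then obtain h2 where h2: "bij_betw h2 (w1 - w2) (u - u')" by blast
  have "\<exists>h. bij_betw h (w2 - w1) (u' - u)"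
    using fin c W U by (intro finite_same_card_bij) (auto simp: cards Int_commute)
  then obtain h3 where h3: "bij_betw h3 (w2 - w1) (u' - u)" by blast
  have "card ({1..n} - (w1 \<union> w2)) = card ({1..n} - (u \<union> u'))"
    unfolding cards(2)[OF W(1,2)] cards(2)[OF U(1,2)] using c W U by simp
  then have "\<exists>h. bij_betw h ({1..n} - (w1 \<union> w2)) ({1..n} - (u \<union> u'))"
    by (intro finite_same_card_bij) auto
  then obtain h4 where h4: "bij_betw h4 ({1..n} - (w1 \<union> w2)) ({1..n} - (u \<union> u'))" by blast
  obtain \<sigma> where \<sigma>: "bij_betw \<sigma> ((w1 \<inter> w2) \<union> (w1 - w2) \<union> (w2 - w1) \<union> ({1..n} - (w1 \<union> w2)))
          ((u \<inter> u') \<union> (u - u') \<union> (u' - u) \<union> ({1..n} - (u \<union> u')))"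
     "\<sigma> ` (w1 \<inter> w2) = u \<inter> u'" "\<sigma> ` (w1 - w2) = u - u'" "\<sigma> ` (w2 - w1) = u' - u"
    using perm4[OF h1 h2 h3 h4] by blast
  have e1: "(w1 \<inter> w2) \<union> (w1 - w2) \<union> (w2 - w1) \<union> ({1..n} - (w1 \<union> w2)) = {1..n}" using W by blast
  have e2: "(u \<inter> u') \<union> (u - u') \<union> (u' - u) \<union> ({1..n} - (u \<union> u')) = {1..n}" using U by blast
  have "\<sigma> ` w1 = \<sigma> ` ((w1 \<inter> w2) \<union> (w1 - w2))" by (metis Int_Diff_Un)
  also have "\<dots> = (u \<inter> u') \<union> (u - u')" by (simp only: image_Un \<sigma>(2,3))
  also have "\<dots> = u" by (rule Int_Diff_Un)
  finally have 1: "\<sigma> ` w1 = u" .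
  have "\<sigma> ` w2 = \<sigma> ` ((w1 \<inter> w2) \<union> (w2 - w1))" by (metis Int_Diff_Un Int_commute)
  also have "\<dots> = (u \<inter> u') \<union> (u' - u)" by (simp only: image_Un \<sigma>(2,4))
  also have "\<dots> = u'" by (metis Int_Diff_Un Int_commute)
  finally have 2: "\<sigma> ` w2 = u'" .
  show ?thesis using \<sigma>(1) e1 e2 1 2 by auto
qed

lemma comb:
  assumes k1: "1 \<le> k" and nk: "2 * k < n" and ck: "c < k"
    and R: "\<forall>u\<in>johnson_V n k. \<forall>u'\<in>johnson_V n k. card (u \<inter> u') = c \<longrightarrow> g u + g u' = (0::complex)"
    and w: "w1 \<in> johnson_V n k" "w2 \<in> johnson_V n k" "card (w1 \<inter> w2) = c"
  shows "\<forall>u\<in>johnson_V n k. g u = 0"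
proof -
  let ?V = "johnson_V n k"
  have stepA: "g u = g v" if uv: "u \<in> ?V" "v \<in> ?V" "card (u \<inter> v) = k - 1" for u v
  proof -
    have U: "u \<subseteq> {1..n}" "v \<subseteq> {1..n}" "card u = k" "card v = k" using uv by (auto simp: johnson_V_def)
    have fu: "finite u" "finite v" using U finite_subset by blast+
    have "c \<le> card (u \<inter> v)" using uv ck by simp
    then obtain C where C: "C \<subseteq> u \<inter> v" "card C = c" "finite C"
      using obtain_subset_with_card_n by metis
    have "card (u \<union> v) = k + 1" using card_Un_Int[OF fu] U uv k1 by simp
    then have "card ({1..n} - (u \<union> v)) = n - (k + 1)" using U fu by (simp add: card_Diff_subset)
    then have "k - c \<le> card ({1..n} - (u \<union> v))" using nk by simp
    then obtain E where E: "E \<subseteq> {1..n} - (u \<union> v)" "card E = k - c" "finite E"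
      using obtain_subset_with_card_n by metis
    let ?x = "C \<union> E"
    have "C \<inter> E = {}" using C E by blast
    then have "card ?x = k" using C E ck card_Un_disjoint by (metis le_add_diff_inverse less_imp_le_nat)
    moreover have "?x \<subseteq> {1..n}" using C E U by blast
    ultimately have xV: "?x \<in> ?V" by (simp add: johnson_V_def)
    have "?x \<inter> u = C" "?x \<inter> v = C" using C E by blast+
    then have "g ?x + g u = 0" "g ?x + g v = 0" using R xV uv C by auto
    then show ?thesis by (metis add_left_imp_eq)
  qed
  have stepB: "\<forall>u v. u \<in> ?V \<longrightarrow> v \<in> ?V \<longrightarrow> card (u - v) = m \<longrightarrow> g u = g v" for m
  proof (induction m)
    case 0
    show ?case
    proof (intro allI impI)
      fix u v assume a: "u \<in> ?V" "v \<in> ?V" "card (u - v) = 0"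
      have U: "u \<subseteq> {1..n}" "v \<subseteq> {1..n}" "card u = k" "card v = k" using a by (auto simp: johnson_V_def)
      have fu: "finite u" "finite v" using U finite_subset by blast+
      have "u \<subseteq> v" using a fu by auto
      then have "u = v" using card_subset_eq fu U by metis
      then show "g u = g v" by simp
    qed
  next
    case (Suc m)
    show ?case
    proof (intro allI impI)
      fix u v assume a: "u \<in> ?V" "v \<in> ?V" "card (u - v) = Suc m"
      have U: "u \<subseteq> {1..n}" "v \<subseteq> {1..n}" "card u = k" "card v = k" using a by (auto simp: johnson_V_def)
      have fu: "finite u" "finite v" using U finite_subset by blast+
      have cvu: "card (v - u) = Suc m"
        using a(3) fu U by (simp add: card_Diff_subset_Int Int_commute)
      obtain x where x: "x \<in> u - v" using a(3) by (metis card.empty ex_in_conv nat.distinct(1))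
      obtain y where y: "y \<in> v - u" using cvu by (metis card.empty ex_in_conv nat.distinct(1))
      let ?u1 = "insert y (u - {x})"
      have cu1: "card ?u1 = k" using fu x y U k1 by auto
      have u1V: "?u1 \<in> ?V" using cu1 U x y by (auto simp: johnson_V_def)
      have "u \<inter> ?u1 = u - {x}" using x y by blast
      then have "card (u \<inter> ?u1) = k - 1" using x fu U by simp
      then have g1: "g u = g ?u1" using stepA a u1V by blast
      have "?u1 - v = (u - v) - {x}" using x y by blast
      then have "card (?u1 - v) = m" using a(3) x fu by simp
      then have "g ?u1 = g v" using Suc.IH u1V a by blast
      then show "g u = g v" using g1 by simp
    qed
  qed
  have const: "g u = g v" if "u \<in> ?V" "v \<in> ?V" for u v using stepB that by blast
  have "g w1 + g w2 = 0" using R w by blast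
  moreover have "g w1 = g w2" using const w by blast
  ultimately have "g w1 = 0" by simp
  then show ?thesis using const w by metis
qed

theorem proposition5:
  fixes n k :: nat and \<gamma> :: real and w1 w2 :: "nat set"
    and f :: "nat set \<Rightarrow> complex" and lam :: complex
  assumes "2 \<le> 2 * k" and "2 * k < n"
    and "w1 \<in> johnson_V n k" and "w2 \<in> johnson_V n k" and "w1 \<noteq> w2"
    and "\<gamma> > 0"
    and "in_Hinv n k w1 w2 f" and "f \<noteq> (\<lambda>_. 0)"
    and "\<forall>v. hamH n k \<gamma> w1 w2 f v = lam * f v"
  shows "(lam \<in> spec_mgA n k \<gamma> \<longleftrightarrow> (\<forall>v. - complex_of_real \<gamma> * adjA n k f v = lam * f v))
       \<and> ((\<forall>v. - complex_of_real \<gamma> * adjA n k f v = lam * f v) \<longleftrightarrow> f w1 = 0)"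
proof -
  let ?V = "johnson_V n k"
  have W: "w1 \<subseteq> {1..n}" "w2 \<subseteq> {1..n}" "card w1 = k" "card w2 = k"
    using assms(3,4) by (auto simp: johnson_V_def)
  have fvec: "is_vec n k f" using assms(7) by (simp add: in_Hinv_def)
  have "f w1 = f w2"
  proof -
    have "card (w1 \<inter> w1 \<inter> w2) = card (w2 \<inter> w1 \<inter> w2)" by (simp add: Int_commute Int_left_commute)
    moreover have "{# card (w1 \<inter> w1), card (w1 \<inter> w2) #} = {# card (w2 \<inter> w1), card (w2 \<inter> w2) #}"
      using W by (simp add: Int_commute add_mset_commute)
    ultimately show ?thesis using assms(7,3,4) unfolding in_Hinv_def by blast
  qed
  define \<alpha> where "\<alpha> = f w1"
  have Tf: "\<forall>v. - complex_of_real \<gamma> * adjA n k f v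
              = lam * f v + (if v = w1 then \<alpha> else 0) + (if v = w2 then \<alpha> else 0)"
  proof
    fix v
    have "hamH n k \<gamma> w1 w2 f v = lam * f v" using assms(9) by blast
    then show "- complex_of_real \<gamma> * adjA n k f v
              = lam * f v + (if v = w1 then \<alpha> else 0) + (if v = w2 then \<alpha> else 0)"
      unfolding hamH_def \<alpha>_def using \<open>f w1 = f w2\<close> by (auto simp: algebra_simps)
  qed
  have iff2: "(\<forall>v. - complex_of_real \<gamma> * adjA n k f v = lam * f v) \<longleftrightarrow> f w1 = 0"
  proof
    assume "\<forall>v. - complex_of_real \<gamma> * adjA n k f v = lam * f v"
    then show "f w1 = 0" using Tf[rule_format, of w1] assms(5) by (simp add: \<alpha>_def)
  next
    assume "f w1 = 0"
    then show "\<forall>v. - complex_of_real \<gamma> * adjA n k f v = lam * f v" using Tf by (simp add: \<alpha>_def)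
  qed
  have iff1: "lam \<in> spec_mgA n k \<gamma> \<longleftrightarrow> (\<forall>v. - complex_of_real \<gamma> * adjA n k f v = lam * f v)"
  proof
    assume "\<forall>v. - complex_of_real \<gamma> * adjA n k f v = lam * f v"
    then show "lam \<in> spec_mgA n k \<gamma>" using fvec assms(8) unfolding spec_mgA_def by blast
  next
    assume "lam \<in> spec_mgA n k \<gamma>"
    then obtain g where g: "is_vec n k g" "g \<noteq> (\<lambda>_. 0)"
      "\<forall>v. - complex_of_real \<gamma> * adjA n k g v = lam * g v" unfolding spec_mgA_def by blast
    show "\<forall>v. - complex_of_real \<gamma> * adjA n k f v = lam * f v"
    proof (rule ccontr)
      assume "\<not> ?thesis"
      then have a: "\<alpha> \<noteq> 0" using iff2 \<alpha>_def by metis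
      let ?c = "card (w1 \<inter> w2)"
      have ck: "?c < k"
      proof (rule ccontr)
        assume "\<not> ?c < k"
        have fw: "finite w1" "finite w2" using W finite_subset by blast+
        have "?c \<le> card w1" using fw by (simp add: card_mono)
        then have "?c = card w1" "?c = card w2" using \<open>\<not> ?c < k\<close> W by auto
        then have "w1 \<inter> w2 = w1" "w1 \<inter> w2 = w2" using fw by (metis card_subset_eq inf_le1 inf_le2)+
        then show False using assms(5) by simp
      qed
      have R: "\<forall>u\<in>?V. \<forall>u'\<in>?V. card (u \<inter> u') = ?c \<longrightarrow> g u + g u' = 0"
      proof (intro ballI impI)
        fix u u' assume u: "u \<in> ?V" "u' \<in> ?V" "card (u \<inter> u') = ?c"
        obtain \<sigma> where \<sigma>: "bij_betw \<sigma> {1..n} {1..n}" "\<sigma> ` w1 = u" "\<sigma> ` w2 = u'"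
          using pairmap[OF assms(3,4) u] by blast
        define h where "h = (\<lambda>v. if v \<in> ?V then g (\<sigma> ` v) else 0)"
        have Th: "\<forall>v. - complex_of_real \<gamma> * adjA n k h v = lam * h v"
          using transport[OF \<sigma>(1) g(3)] unfolding h_def by blast
        have "h w1 + h w2 = 0" using pair_zero[OF assms(3,4,5) a Tf Th] .
        then show "g u + g u' = 0" using \<sigma> assms(3,4) by (simp add: h_def)
      qed
      have "\<forall>u\<in>?V. g u = 0" using comb[of k n ?c g w1 w2] assms(1,2,3,4) ck R by simp
      then have "g = (\<lambda>_. 0)" using g(1) unfolding is_vec_def by auto
      then show False using g(2) by simp
    qed
  qed
  show ?thesis using iff1 iff2 by blast
qed

end
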